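(* Let $\mathscr M,\mathscr N$ be convex, weakly compact subsets of $ba(\mathcal A)$. Then (i) $\mathscr M\cap\mathscr N=\varnothing$ if and only if there exists $f\in\mathcal S(\mathcal A)$ with $\inf_{\nu\in\mathscr N}\nu(f)>\sup_{\mu\in\mathscr M}\mu(f)$; and (ii) there exist $\mathcal K\subset\mathcal S(\mathcal A)$ and a set $\mathscr M_0$ of extreme points of $\mathscr M$ such that $\mathscr M=\{m\in ba(\mathcal A):m(k)\le\max_{\mu\in\mathscr M_0}\mu(k)\text{ for all }k\in\mathcal K\}$.
   Context: $\mathcal A$ algebra of subsets of $\Omega$; $ba(\mathcal A)$ the Banach space of bounded finitely additive real set functions with total variation norm; "weakly" refers to the weak topology of this Banach space. $\mathcal S(\mathcal A)$ the $\mathcal A$-simple functions and $\mu(f)=\int f\,d\mu$. *)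

theory Defs
  imports "HOL-Analysis.Analysis"
begin

text \<open>Elements of ba(A) are represented as real functions on sets which vanish
  outside the algebra A (so that ba(A) is a set of functions).\<close>

definition ba :: "'a set \<Rightarrow> 'a set set \<Rightarrow> ('a set \<Rightarrow> real) set" where
  "ba \<Omega> A = {\<mu>. (\<forall>E. E \<notin> A \<longrightarrow> \<mu> E = 0)
      \<and> (\<forall>E\<in>A. \<forall>F\<in>A. E \<inter> F = {} \<longrightarrow> \<mu> (E \<union> F) = \<mu> E + \<mu> F)
      \<and> (\<exists>C. \<forall>E\<in>A. \<bar>\<mu> E\<bar> \<le> C)}"

definition tv_norm :: "'a set \<Rightarrow> 'a set set \<Rightarrow> ('a set \<Rightarrow> real) \<Rightarrow> real" where
  "tv_norm \<Omega> A \<mu> = Sup {(\<Sum>E\<in>P. \<bar>\<mu> E\<bar>) | P. finite P \<and> P \<subseteq> A \<and> disjoint P \<and> \<Union>P = \<Omega>}"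

definition ba_dual :: "'a set \<Rightarrow> 'a set set \<Rightarrow> (('a set \<Rightarrow> real) \<Rightarrow> real) set" where
  "ba_dual \<Omega> A = {\<phi>. (\<forall>\<mu>\<in>ba \<Omega> A. \<forall>\<nu>\<in>ba \<Omega> A. \<phi> (\<lambda>E. \<mu> E + \<nu> E) = \<phi> \<mu> + \<phi> \<nu>)
      \<and> (\<forall>\<mu>\<in>ba \<Omega> A. \<forall>c. \<phi> (\<lambda>E. c * \<mu> E) = c * \<phi> \<mu>)
      \<and> (\<exists>C. \<forall>\<mu>\<in>ba \<Omega> A. \<bar>\<phi> \<mu>\<bar> \<le> C * tv_norm \<Omega> A \<mu>)}"

definition weak_ba :: "'a set \<Rightarrow> 'a set set \<Rightarrow> ('a set \<Rightarrow> real) topology" where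
  "weak_ba \<Omega> A = topology_generated_by
     {{\<mu> \<in> ba \<Omega> A. \<phi> \<mu> \<in> U} | \<phi> U. \<phi> \<in> ba_dual \<Omega> A \<and> open U}"

definition simple_fns :: "'a set \<Rightarrow> 'a set set \<Rightarrow> ('a \<Rightarrow> real) set" where
  "simple_fns \<Omega> A = {f. finite (f ` \<Omega>) \<and> (\<forall>y. {x\<in>\<Omega>. f x = y} \<in> A)}"

definition ba_integral :: "'a set \<Rightarrow> ('a set \<Rightarrow> real) \<Rightarrow> ('a \<Rightarrow> real) \<Rightarrow> real" where
  "ba_integral \<Omega> \<mu> f = (\<Sum>y\<in>f ` \<Omega>. y * \<mu> {x\<in>\<Omega>. f x = y})"

definition convex_ba :: "('a set \<Rightarrow> real) set \<Rightarrow> bool" where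
  "convex_ba M \<longleftrightarrow> (\<forall>\<mu>\<in>M. \<forall>\<nu>\<in>M. \<forall>t::real. 0 \<le> t \<and> t \<le> 1 \<longrightarrow>
       (\<lambda>E. t * \<mu> E + (1 - t) * \<nu> E) \<in> M)"

definition extreme_points_ba :: "('a set \<Rightarrow> real) set \<Rightarrow> ('a set \<Rightarrow> real) set" where
  "extreme_points_ba M = {m \<in> M. \<not> (\<exists>\<mu>\<in>M. \<exists>\<nu>\<in>M. \<exists>t::real. \<mu> \<noteq> \<nu> \<and> 0 < t \<and> t < 1 \<and>
       m = (\<lambda>E. t * \<mu> E + (1 - t) * \<nu> E))}"

end

theory Submission
  imports Defs
begin

lemma ba_add:
  assumes "\<mu> \<in> ba \<Omega> A" "E \<in> A" "F \<in> A" "E \<inter> F = {}"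
  shows "\<mu> (E \<union> F) = \<mu> E + \<mu> F"
  using assms unfolding ba_def by auto

lemma ba_out: "\<mu> \<in> ba \<Omega> A \<Longrightarrow> E \<notin> A \<Longrightarrow> \<mu> E = 0"
  unfolding ba_def by auto

lemma ba_empty:
  assumes "algebra \<Omega> A" "\<mu> \<in> ba \<Omega> A"
  shows "\<mu> {} = 0"
proof -
  interpret algebra \<Omega> A by fact
  have "\<mu> ({} \<union> {}) = \<mu> {} + \<mu> {}" using ba_add[OF assms(2) empty_sets empty_sets] by simp
  thus ?thesis by simp
qed

lemma ba_finite_add:
  assumes alg: "algebra \<Omega> A" and mu: "\<mu> \<in> ba \<Omega> A" and "finite I"
    and "\<And>i. i\<in>I \<Longrightarrow> B i \<in> A"
    and "\<And>i j. i\<in>I \<Longrightarrow> j\<in>I \<Longrightarrow> i\<noteq>j \<Longrightarrow> B i \<inter> B j = {}"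
  shows "\<mu> (\<Union>i\<in>I. B i) = (\<Sum>i\<in>I. \<mu> (B i))"
  using assms(3-5)
proof (induction I rule: finite_induct)
  case empty then show ?case using ba_empty[OF alg mu] by simp
next
  case (insert i I)
  interpret algebra \<Omega> A by fact
  have e: "(\<Union>j\<in>insert i I. B j) = B i \<union> (\<Union>j\<in>I. B j)" by auto
  have d: "B i \<inter> (\<Union>j\<in>I. B j) = {}" using insert(2,5) by fastforce
  have u: "(\<Union>j\<in>I. B j) \<in> A" using insert by auto
  have "\<mu> (\<Union>j\<in>insert i I. B j) = \<mu> (B i) + \<mu> (\<Union>j\<in>I. B j)"
    unfolding e by (rule ba_add[OF mu]) (use insert u d in auto)
  also have "\<dots> = \<mu> (B i) + (\<Sum>j\<in>I. \<mu> (B j))" using insert by auto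
  finally show ?case using insert by simp
qed

lemma partition_simple:
  assumes alg: "algebra \<Omega> A" and fin: "finite J"
    and BA: "\<And>j. j\<in>J \<Longrightarrow> B j \<in> A"
    and cov: "\<Omega> \<subseteq> (\<Union>j\<in>J. B j)"
    and val: "\<And>j x. j\<in>J \<Longrightarrow> x \<in> B j \<Longrightarrow> f x = c j"
  shows "f \<in> simple_fns \<Omega> A"
    and "\<And>y. {x\<in>\<Omega>. f x = y} = (\<Union>j\<in>{j\<in>J. c j = y}. B j)"
    and "f ` \<Omega> \<subseteq> c ` J"
proof -
  interpret algebra \<Omega> A by fact
  have sub: "\<And>j. j \<in> J \<Longrightarrow> B j \<subseteq> \<Omega>" using BA space_closed by auto
  show lev: "\<And>y. {x\<in>\<Omega>. f x = y} = (\<Union>j\<in>{j\<in>J. c j = y}. B j)"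
  proof
    fix y show "{x\<in>\<Omega>. f x = y} \<subseteq> (\<Union>j\<in>{j\<in>J. c j = y}. B j)"
      using cov val by fastforce
    show "(\<Union>j\<in>{j\<in>J. c j = y}. B j) \<subseteq> {x\<in>\<Omega>. f x = y}"
      using sub val by fastforce
  qed
  show img: "f ` \<Omega> \<subseteq> c ` J" using cov val by fastforce
  show "f \<in> simple_fns \<Omega> A"
    unfolding simple_fns_def
  proof (intro CollectI conjI allI)
    show "finite (f ` \<Omega>)" using img fin finite_subset by blast
    fix y show "{x\<in>\<Omega>. f x = y} \<in> A" unfolding lev using fin BA by auto
  qed
qed

lemma ba_integral_partition:
  assumes alg: "algebra \<Omega> A" and mu: "\<mu> \<in> ba \<Omega> A" and fin: "finite J"
    and BA: "\<And>j. j\<in>J \<Longrightarrow> B j \<in> A"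
    and disj: "\<And>i j. i\<in>J \<Longrightarrow> j\<in>J \<Longrightarrow> i\<noteq>j \<Longrightarrow> B i \<inter> B j = {}"
    and cov: "\<Omega> \<subseteq> (\<Union>j\<in>J. B j)"
    and val: "\<And>j x. j\<in>J \<Longrightarrow> x \<in> B j \<Longrightarrow> f x = c j"
  shows "ba_integral \<Omega> \<mu> f = (\<Sum>j\<in>J. c j * \<mu> (B j))"
proof -
  note P = partition_simple[OF alg fin BA cov val]
  have ml: "\<mu> {x\<in>\<Omega>. f x = y} = (\<Sum>j\<in>{j\<in>J. c j = y}. \<mu> (B j))" for y
  proof -
    have "\<mu> {x\<in>\<Omega>. f x = y} = \<mu> (\<Union>j\<in>{j\<in>J. c j = y}. B j)" using P(2)[where y=y] by simp
    also have "\<dots> = (\<Sum>j\<in>{j\<in>J. c j = y}. \<mu> (B j))"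
      by (rule ba_finite_add[OF alg mu]) (use fin BA disj in auto)
    finally show ?thesis .
  qed
  have "ba_integral \<Omega> \<mu> f = (\<Sum>y\<in>f ` \<Omega>. y * \<mu> {x\<in>\<Omega>. f x = y})"
    by (simp add: ba_integral_def)
  also have "\<dots> = (\<Sum>y\<in>c ` J. y * \<mu> {x\<in>\<Omega>. f x = y})"
  proof (rule sum.mono_neutral_left)
    show "finite (c ` J)" using fin by simp
    show "f ` \<Omega> \<subseteq> c ` J" by (rule P(3))
    show "\<forall>i\<in>c ` J - f ` \<Omega>. i * \<mu> {x \<in> \<Omega>. f x = i} = 0"
    proof
      fix i assume "i \<in> c ` J - f ` \<Omega>"
      then have e: "{x \<in> \<Omega>. f x = i} = {}" by force
      show "i * \<mu> {x \<in> \<Omega>. f x = i} = 0" unfolding e using ba_empty[OF alg mu] by simp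
    qed
  qed
  also have "\<dots> = (\<Sum>y\<in>c ` J. (\<Sum>j\<in>{j\<in>J. c j = y}. c j * \<mu> (B j)))"
    unfolding ml sum_distrib_left by (intro sum.cong refl) auto
  also have "\<dots> = (\<Sum>j\<in>J. c j * \<mu> (B j))"
    by (rule sum.group) (use fin in auto)
  finally show ?thesis .
qed

lemma lincomb_partition:
  assumes alg: "algebra \<Omega> A" and f: "f \<in> simple_fns \<Omega> A" and g: "g \<in> simple_fns \<Omega> A"
  defines "J \<equiv> f ` \<Omega> \<times> g ` \<Omega>"
  defines "B \<equiv> (\<lambda>(y,z). {x\<in>\<Omega>. f x = y} \<inter> {x\<in>\<Omega>. g x = z})"
  shows "finite J" "\<And>j. j\<in>J \<Longrightarrow> B j \<in> A"
    "\<And>i j. i\<in>J \<Longrightarrow> j\<in>J \<Longrightarrow> i\<noteq>j \<Longrightarrow> B i \<inter> B j = {}"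
    "\<Omega> \<subseteq> (\<Union>j\<in>J. B j)"
    "\<And>j x. j\<in>J \<Longrightarrow> x \<in> B j \<Longrightarrow> f x = fst j"
    "\<And>j x. j\<in>J \<Longrightarrow> x \<in> B j \<Longrightarrow> g x = snd j"
proof -
  interpret algebra \<Omega> A by fact
  show "finite J" using f g unfolding J_def simple_fns_def by auto
  show "\<And>j. j\<in>J \<Longrightarrow> B j \<in> A" using f g unfolding B_def simple_fns_def by auto
  show "\<And>i j. i\<in>J \<Longrightarrow> j\<in>J \<Longrightarrow> i\<noteq>j \<Longrightarrow> B i \<inter> B j = {}"
    unfolding B_def by auto
  show "\<Omega> \<subseteq> (\<Union>j\<in>J. B j)" unfolding B_def J_def by auto
  show "\<And>j x. j\<in>J \<Longrightarrow> x \<in> B j \<Longrightarrow> f x = fst j" unfolding B_def by auto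
  show "\<And>j x. j\<in>J \<Longrightarrow> x \<in> B j \<Longrightarrow> g x = snd j" unfolding B_def by auto
qed

lemma lincomb_simple:
  assumes alg: "algebra \<Omega> A" and f: "f \<in> simple_fns \<Omega> A" and g: "g \<in> simple_fns \<Omega> A"
  shows "(\<lambda>x. a * f x + b * g x) \<in> simple_fns \<Omega> A"
proof -
  note L = lincomb_partition[OF alg f g]
  let ?J = "f ` \<Omega> \<times> g ` \<Omega>"
  let ?B = "(\<lambda>(y,z). {x\<in>\<Omega>. f x = y} \<inter> {x\<in>\<Omega>. g x = z})"
  have v: "\<And>j x. j\<in>?J \<Longrightarrow> x \<in> ?B j \<Longrightarrow> a * f x + b * g x = a * fst j + b * snd j"
    by (auto split: prod.splits)
  show ?thesis
    using partition_simple(1)[OF alg L(1) L(2) L(4) v] by simp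
qed

lemma lincomb_integral:
  assumes alg: "algebra \<Omega> A" and mu: "\<mu> \<in> ba \<Omega> A"
    and f: "f \<in> simple_fns \<Omega> A" and g: "g \<in> simple_fns \<Omega> A"
  shows "ba_integral \<Omega> \<mu> (\<lambda>x. a * f x + b * g x) = a * ba_integral \<Omega> \<mu> f + b * ba_integral \<Omega> \<mu> g"
proof -
  note L = lincomb_partition[OF alg f g]
  let ?J = "f ` \<Omega> \<times> g ` \<Omega>"
  let ?B = "(\<lambda>(y,z). {x\<in>\<Omega>. f x = y} \<inter> {x\<in>\<Omega>. g x = z})"
  have 1: "ba_integral \<Omega> \<mu> (\<lambda>x. a * f x + b * g x) = (\<Sum>j\<in>?J. (a * fst j + b * snd j) * \<mu> (?B j))"
    by (rule ba_integral_partition[OF alg mu L(1) L(2) L(3) L(4)]) (auto split: prod.splits)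
  have 2: "ba_integral \<Omega> \<mu> f = (\<Sum>j\<in>?J. fst j * \<mu> (?B j))"
    by (rule ba_integral_partition[OF alg mu L(1) L(2) L(3) L(4)]) (auto split: prod.splits)
  have 3: "ba_integral \<Omega> \<mu> g = (\<Sum>j\<in>?J. snd j * \<mu> (?B j))"
    by (rule ba_integral_partition[OF alg mu L(1) L(2) L(3) L(4)]) (auto split: prod.splits)
  show ?thesis unfolding 1 2 3
    by (simp add: sum_distrib_left sum.distrib algebra_simps)
qed

lemma zero_simple:
  assumes alg: "algebra \<Omega> A"
  shows "(\<lambda>x. 0) \<in> simple_fns \<Omega> A" "ba_integral \<Omega> \<mu> (\<lambda>x. 0) = 0"
proof -
  interpret algebra \<Omega> A by fact
  show "(\<lambda>x. 0) \<in> simple_fns \<Omega> A"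
    by (rule partition_simple(1)[OF alg, of "{()}" "\<lambda>_. \<Omega>" _ "\<lambda>_. 0"]) auto
  show "ba_integral \<Omega> \<mu> (\<lambda>x. 0) = 0"
    unfolding ba_integral_def by (intro sum.neutral) auto
qed

lemma sum_simple:
  assumes alg: "algebra \<Omega> A" and fin: "finite I" and g: "\<And>i. i \<in> I \<Longrightarrow> g i \<in> simple_fns \<Omega> A"
  shows "(\<lambda>x. \<Sum>i\<in>I. w i * g i x) \<in> simple_fns \<Omega> A \<and>
    (\<forall>\<mu>\<in>ba \<Omega> A. ba_integral \<Omega> \<mu> (\<lambda>x. \<Sum>i\<in>I. w i * g i x) = (\<Sum>i\<in>I. w i * ba_integral \<Omega> \<mu> (g i)))"
  using fin g
proof (induction I rule: finite_induct)
  case empty then show ?case using zero_simple[OF alg] by simp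
next
  case (insert i I)
  have e: "(\<lambda>x. \<Sum>j\<in>insert i I. w j * g j x) = (\<lambda>x. w i * g i x + 1 * (\<Sum>j\<in>I. w j * g j x))"
    using insert by simp
  have gi: "g i \<in> simple_fns \<Omega> A" using insert by simp
  have IH: "(\<lambda>x. \<Sum>i\<in>I. w i * g i x) \<in> simple_fns \<Omega> A \<and>
    (\<forall>\<mu>\<in>ba \<Omega> A. ba_integral \<Omega> \<mu> (\<lambda>x. \<Sum>i\<in>I. w i * g i x) = (\<Sum>i\<in>I. w i * ba_integral \<Omega> \<mu> (g i)))"
    using insert by simp
  show ?case unfolding e
    using lincomb_simple[OF alg gi conjunct1[OF IH], where a="w i" and b=1]
      lincomb_integral[OF alg _ gi conjunct1[OF IH], where a="w i" and b=1] IH insert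
    by simp
qed

lemma indicator_simple:
  assumes alg: "algebra \<Omega> A" and E: "E \<in> A"
  shows "(\<lambda>x. if x \<in> E then c else 0) \<in> simple_fns \<Omega> A"
    "\<mu> \<in> ba \<Omega> A \<Longrightarrow> ba_integral \<Omega> \<mu> (\<lambda>x. if x \<in> E then c else 0) = c * \<mu> E"
proof -
  interpret algebra \<Omega> A by fact
  let ?B = "\<lambda>b. if b then E else \<Omega> - E"
  let ?c = "\<lambda>b. if b then c else (0::real)"
  show "(\<lambda>x. if x \<in> E then c else 0) \<in> simple_fns \<Omega> A"
    by (rule partition_simple(1)[OF alg, of UNIV ?B _ ?c]) (use E in auto)
  assume mu: "\<mu> \<in> ba \<Omega> A"
  have "ba_integral \<Omega> \<mu> (\<lambda>x. if x \<in> E then c else 0) = (\<Sum>b\<in>UNIV. ?c b * \<mu> (?B b))"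
    by (rule ba_integral_partition[OF alg mu]) (use E in auto)
  also have "\<dots> = c * \<mu> E" by (simp add: UNIV_bool)
  finally show "ba_integral \<Omega> \<mu> (\<lambda>x. if x \<in> E then c else 0) = c * \<mu> E" .
qed

lemma integral_comb:
  "ba_integral \<Omega> (\<lambda>E. t * \<mu> E + s * \<nu> E) f = t * ba_integral \<Omega> \<mu> f + s * ba_integral \<Omega> \<nu> f"
  unfolding ba_integral_def by (simp add: sum_distrib_left sum.distrib algebra_simps)

lemma ba_partition_bound:
  assumes alg: "algebra \<Omega> A" and mu: "\<mu> \<in> ba \<Omega> A" and C: "\<forall>E\<in>A. \<bar>\<mu> E\<bar> \<le> C"
    and P: "finite P" "P \<subseteq> A" "disjoint P"
  shows "(\<Sum>E\<in>P. \<bar>\<mu> E\<bar>) \<le> 2 * C"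
proof -
  interpret algebra \<Omega> A by fact
  define P1 where "P1 = {E\<in>P. \<mu> E \<ge> 0}"
  define P2 where "P2 = {E\<in>P. \<mu> E < 0}"
  have fin: "finite P1" "finite P2" using P unfolding P1_def P2_def by auto
  have PU: "P = P1 \<union> P2" "P1 \<inter> P2 = {}" unfolding P1_def P2_def by auto
  have s: "(\<Sum>E\<in>P. \<bar>\<mu> E\<bar>) = (\<Sum>E\<in>P1. \<mu> E) - (\<Sum>E\<in>P2. \<mu> E)"
  proof -
    have "(\<Sum>E\<in>P. \<bar>\<mu> E\<bar>) = (\<Sum>E\<in>P1. \<bar>\<mu> E\<bar>) + (\<Sum>E\<in>P2. \<bar>\<mu> E\<bar>)"
      unfolding PU(1) by (rule sum.union_disjoint) (use fin PU in auto)
    also have "(\<Sum>E\<in>P1. \<bar>\<mu> E\<bar>) = (\<Sum>E\<in>P1. \<mu> E)" unfolding P1_def by (intro sum.cong) auto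
    also have "(\<Sum>E\<in>P2. \<bar>\<mu> E\<bar>) = - (\<Sum>E\<in>P2. \<mu> E)"
      unfolding P2_def sum_negf[symmetric] by (intro sum.cong) auto
    finally show ?thesis by simp
  qed
  have dj: "\<And>Q. Q \<subseteq> P \<Longrightarrow> \<forall>i\<in>Q. \<forall>j\<in>Q. i \<noteq> j \<longrightarrow> id i \<inter> id j = {}"
    using P(3) unfolding disjoint_def disjnt_def by auto
  have "\<mu> (\<Union>E\<in>P1. id E) = (\<Sum>E\<in>P1. \<mu> (id E))"
    by (rule ba_finite_add[OF alg mu]) (use fin P dj[of P1] in \<open>auto simp: P1_def\<close>)
  moreover have "\<mu> (\<Union>E\<in>P2. id E) = (\<Sum>E\<in>P2. \<mu> (id E))"
    by (rule ba_finite_add[OF alg mu]) (use fin P dj[of P2] in \<open>auto simp: P2_def\<close>)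
  moreover have "(\<Union>E\<in>P1. id E) \<in> A" "(\<Union>E\<in>P2. id E) \<in> A"
    using fin P by (auto simp: P1_def P2_def)
  ultimately have "\<bar>(\<Sum>E\<in>P1. \<mu> E)\<bar> \<le> C" "\<bar>(\<Sum>E\<in>P2. \<mu> E)\<bar> \<le> C"
    using C by auto
  then show ?thesis using s by linarith
qed

lemma tv_upper:
  assumes alg: "algebra \<Omega> A" and mu: "\<mu> \<in> ba \<Omega> A"
    and P: "finite P" "P \<subseteq> A" "disjoint P" "\<Union>P = \<Omega>"
  shows "(\<Sum>E\<in>P. \<bar>\<mu> E\<bar>) \<le> tv_norm \<Omega> A \<mu>"
proof -
  obtain C where C: "\<forall>E\<in>A. \<bar>\<mu> E\<bar> \<le> C" using mu unfolding ba_def by auto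
  have bdd: "bdd_above {(\<Sum>E\<in>P. \<bar>\<mu> E\<bar>) | P. finite P \<and> P \<subseteq> A \<and> disjoint P \<and> \<Union>P = \<Omega>}"
    using ba_partition_bound[OF alg mu C] by (intro bdd_aboveI[where M="2*C"]) auto
  show ?thesis unfolding tv_norm_def by (rule cSup_upper[OF _ bdd]) (use P in auto)
qed

lemma integral_dual:
  assumes alg: "algebra \<Omega> A" and f: "f \<in> simple_fns \<Omega> A"
  shows "(\<lambda>\<mu>. ba_integral \<Omega> \<mu> f) \<in> ba_dual \<Omega> A"
proof -
  interpret algebra \<Omega> A by fact
  have fin: "finite (f ` \<Omega>)" and lev: "\<And>y. {x\<in>\<Omega>. f x = y} \<in> A" using f unfolding simple_fns_def by auto
  define C where "C = (\<Sum>y\<in>f ` \<Omega>. \<bar>y\<bar>)"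
  define L where "L = (\<lambda>y. {x\<in>\<Omega>. f x = y})"
  have inj: "inj_on L (f ` \<Omega>)" unfolding L_def inj_on_def by blast
  have bound: "\<bar>ba_integral \<Omega> \<mu> f\<bar> \<le> C * tv_norm \<Omega> A \<mu>" if mu: "\<mu> \<in> ba \<Omega> A" for \<mu>
  proof -
    have "\<bar>ba_integral \<Omega> \<mu> f\<bar> \<le> (\<Sum>y\<in>f ` \<Omega>. \<bar>y * \<mu> (L y)\<bar>)"
      unfolding ba_integral_def L_def by (rule sum_abs)
    also have "\<dots> \<le> (\<Sum>y\<in>f ` \<Omega>. C * \<bar>\<mu> (L y)\<bar>)"
    proof (rule sum_mono)
      fix y assume "y \<in> f ` \<Omega>"
      then have "\<bar>y\<bar> \<le> C" unfolding C_def using fin by (intro member_le_sum) auto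
      then show "\<bar>y * \<mu> (L y)\<bar> \<le> C * \<bar>\<mu> (L y)\<bar>" by (simp add: abs_mult mult_right_mono)
    qed
    also have "\<dots> = C * (\<Sum>E\<in>L ` f ` \<Omega>. \<bar>\<mu> E\<bar>)"
      by (simp add: sum_distrib_left sum.reindex[OF inj])
    also have "\<dots> \<le> C * tv_norm \<Omega> A \<mu>"
    proof (rule mult_left_mono)
      show "0 \<le> C" unfolding C_def by (simp add: sum_nonneg)
      show "(\<Sum>E\<in>L ` f ` \<Omega>. \<bar>\<mu> E\<bar>) \<le> tv_norm \<Omega> A \<mu>"
      proof (rule tv_upper[OF alg mu])
        show "finite (L ` f ` \<Omega>)" using fin by simp
        show "L ` f ` \<Omega> \<subseteq> A" using lev unfolding L_def by auto
        show "disjoint (L ` f ` \<Omega>)" unfolding disjoint_def disjnt_def L_def by auto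
        show "\<Union>(L ` f ` \<Omega>) = \<Omega>" unfolding L_def by auto
      qed
    qed
    finally show ?thesis .
  qed
  have add: "\<And>\<mu> \<nu>. ba_integral \<Omega> (\<lambda>E. \<mu> E + \<nu> E) f = ba_integral \<Omega> \<mu> f + ba_integral \<Omega> \<nu> f"
    using integral_comb[where t=1 and s=1 and \<Omega>=\<Omega> and f=f] by simp
  have scal: "\<And>\<mu> c. ba_integral \<Omega> (\<lambda>E. c * \<mu> E) f = c * ba_integral \<Omega> \<mu> f"
    using integral_comb[where s=0 and \<Omega>=\<Omega> and f=f] by simp
  show ?thesis unfolding ba_dual_def mem_Collect_eq
  proof (intro conjI)
    show "\<exists>C. \<forall>\<mu>\<in>ba \<Omega> A. \<bar>ba_integral \<Omega> \<mu> f\<bar> \<le> C * tv_norm \<Omega> A \<mu>"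
      by (rule exI[of _ C]) (use bound in auto)
  qed (use add scal in auto)
qed

lemma topspace_weak: "topspace (weak_ba \<Omega> A) = ba \<Omega> A"
proof -
  have z: "(\<lambda>_. 0) \<in> ba_dual \<Omega> A" unfolding ba_dual_def by (auto intro: exI[of _ 0])
  show ?thesis unfolding weak_ba_def topology_generated_by_topspace
  proof
    show "\<Union> {{\<mu> \<in> ba \<Omega> A. \<phi> \<mu> \<in> U} |\<phi> U. \<phi> \<in> ba_dual \<Omega> A \<and> open U} \<subseteq> ba \<Omega> A" by auto
    show "ba \<Omega> A \<subseteq> \<Union> {{\<mu> \<in> ba \<Omega> A. \<phi> \<mu> \<in> U} |\<phi> U. \<phi> \<in> ba_dual \<Omega> A \<and> open U}"
    proof
      fix \<mu> assume "\<mu> \<in> ba \<Omega> A"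
      then show "\<mu> \<in> \<Union> {{\<mu> \<in> ba \<Omega> A. \<phi> \<mu> \<in> U} |\<phi> U. \<phi> \<in> ba_dual \<Omega> A \<and> open U}"
        using z by (intro UnionI[of "{\<mu> \<in> ba \<Omega> A. (\<lambda>_. 0::real) \<mu> \<in> UNIV}"]) blast+
    qed
  qed
qed

lemma cont_dual:
  assumes "\<phi> \<in> ba_dual \<Omega> A"
  shows "continuous_map (weak_ba \<Omega> A) euclideanreal \<phi>"
  unfolding continuous_map_def topspace_weak
proof (intro conjI allI impI)
  show "\<phi> \<in> ba \<Omega> A \<rightarrow> topspace euclideanreal" by simp
  fix U :: "real set" assume "openin euclideanreal U"
  then have "open U" by simp
  then show "openin (weak_ba \<Omega> A) {x \<in> ba \<Omega> A. \<phi> x \<in> U}"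
    unfolding weak_ba_def using assms by (intro topology_generated_by_Basis) blast
qed

lemma cont_integral:
  assumes "algebra \<Omega> A" "f \<in> simple_fns \<Omega> A"
  shows "continuous_map (weak_ba \<Omega> A) euclideanreal (\<lambda>\<mu>. ba_integral \<Omega> \<mu> f)"
  by (rule cont_dual[OF integral_dual[OF assms]])

lemma sq_max_ineq: "(max 0 (u - s))\<^sup>2 \<le> (max 0 u - s)\<^sup>2" for u s :: real
  unfolding abs_le_square_iff[symmetric] by (auto simp: max_def abs_if)

lemma var_ineq:
  fixes a d :: "'b \<Rightarrow> real"
  assumes fin: "finite F"
    and min: "\<And>t. 0 < t \<Longrightarrow> t \<le> 1 \<Longrightarrow>
       (\<Sum>f\<in>F. (max 0 (-1 - a f))\<^sup>2) \<le> (\<Sum>f\<in>F. (max 0 (-1 - (a f + t * d f)))\<^sup>2)"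
  shows "(\<Sum>f\<in>F. max 0 (-1 - a f) * d f) \<le> 0"
proof (rule ccontr)
  define w where "w f = max 0 (-1 - a f)" for f
  define S where "S = (\<Sum>f\<in>F. w f * d f)"
  define Q where "Q = (\<Sum>f\<in>F. (d f)\<^sup>2)"
  assume "\<not> (\<Sum>f\<in>F. max 0 (-1 - a f) * d f) \<le> 0"
  then have Spos: "S > 0" unfolding S_def w_def by simp
  have Q0: "Q \<ge> 0" unfolding Q_def by (simp add: sum_nonneg)
  define t where "t = min 1 (S / (Q + 1))"
  have t0: "0 < t" "t \<le> 1" unfolding t_def using Spos Q0 by auto
  have key: "2 * t * S \<le> t\<^sup>2 * Q"
  proof -
    have "(\<Sum>f\<in>F. (w f)\<^sup>2) \<le> (\<Sum>f\<in>F. (max 0 (-1 - (a f + t * d f)))\<^sup>2)"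
      using min[OF t0] unfolding w_def .
    also have "\<dots> \<le> (\<Sum>f\<in>F. (w f - t * d f)\<^sup>2)"
    proof (rule sum_mono)
      fix f show "(max 0 (-1 - (a f + t * d f)))\<^sup>2 \<le> (w f - t * d f)\<^sup>2"
        using sq_max_ineq[of "-1 - a f" "t * d f"] unfolding w_def by (simp add: algebra_simps)
    qed
    also have "\<dots> = (\<Sum>f\<in>F. (w f)\<^sup>2) - 2 * t * S + t\<^sup>2 * Q"
      unfolding S_def Q_def
      by (simp add: power2_diff sum.distrib sum_subtractf sum_distrib_left algebra_simps power_mult_distrib)
    finally show ?thesis by simp
  qed
  have "2 * S \<le> t * Q"
  proof -
    have "t * (2 * S) \<le> t * (t * Q)" using key by (simp add: power2_eq_square algebra_simps)
    then show ?thesis using t0 by simp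
  qed
  moreover have "t * Q < 2 * S"
  proof -
    have "t \<le> S / (Q + 1)" unfolding t_def by simp
    then have "t * Q \<le> S / (Q + 1) * Q" by (rule mult_right_mono[OF _ Q0])
    also have "\<dots> = S * (Q / (Q + 1))" by simp
    also have "\<dots> \<le> S * 1" using Q0 Spos by (intro mult_left_mono) auto
    finally show ?thesis using Spos by simp
  qed
  ultimately show False by simp
qed

lemma separation:
  assumes alg: "algebra \<Omega> A" and MA: "M \<subseteq> ba \<Omega> A" and NA: "N \<subseteq> ba \<Omega> A"
    and cM: "convex_ba M" and cN: "convex_ba N"
    and kM: "compactin (weak_ba \<Omega> A) M" and kN: "compactin (weak_ba \<Omega> A) N"
    and disj: "M \<inter> N = {}" and neM: "M \<noteq> {}" and neN: "N \<noteq> {}"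
  shows "\<exists>g\<in>simple_fns \<Omega> A. \<exists>\<delta><0. \<forall>\<mu>\<in>M. \<forall>\<nu>\<in>N. ba_integral \<Omega> \<mu> g - ba_integral \<Omega> \<nu> g \<le> \<delta>"
proof -
  let ?W = "weak_ba \<Omega> A"
  let ?P = "prod_topology ?W ?W"
  define X where "X f z = ba_integral \<Omega> (fst z) f - ba_integral \<Omega> (snd z) f" for f z
  have contX: "continuous_map ?P euclideanreal (X f)" if "f \<in> simple_fns \<Omega> A" for f
  proof -
    have c1: "continuous_map ?P euclideanreal (\<lambda>z. ba_integral \<Omega> (fst z) f)"
      using continuous_map_compose[OF continuous_map_fst cont_integral[OF alg that]] by (simp add: o_def)
    have c2: "continuous_map ?P euclideanreal (\<lambda>z. ba_integral \<Omega> (snd z) f)"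
      using continuous_map_compose[OF continuous_map_snd cont_integral[OF alg that]] by (simp add: o_def)
    show ?thesis unfolding X_def by (rule continuous_map_diff[OF c1 c2])
  qed
  have topP: "topspace ?P = ba \<Omega> A \<times> ba \<Omega> A" by (simp add: topspace_weak)
  have cpt: "compactin ?P (M \<times> N)" using kM kN by (simp add: compactin_Times)
  define U where "U f = {z \<in> topspace ?P. X f z \<in> {..< -1}}" for f
  have opU: "openin ?P (U f)" if "f \<in> simple_fns \<Omega> A" for f
    unfolding U_def by (rule openin_continuous_map_preimage[OF contX[OF that]]) simp
  have cov: "M \<times> N \<subseteq> \<Union>(U ` simple_fns \<Omega> A)"
  proof clarify
    fix \<mu> \<nu> assume mu: "\<mu> \<in> M" and nu: "\<nu> \<in> N"
    then have "\<mu> \<noteq> \<nu>" using disj by auto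
    then obtain E where E: "\<mu> E \<noteq> \<nu> E" by (auto simp: fun_eq_iff)
    have muA: "\<mu> \<in> ba \<Omega> A" and nuA: "\<nu> \<in> ba \<Omega> A" using mu nu MA NA by auto
    have EA: "E \<in> A" using E ba_out[OF muA] ba_out[OF nuA] by metis
    define c where "c = -2 / (\<mu> E - \<nu> E)"
    define f where "f = (\<lambda>x. if x \<in> E then c else 0)"
    have fs: "f \<in> simple_fns \<Omega> A" unfolding f_def by (rule indicator_simple(1)[OF alg EA])
    have "X f (\<mu>, \<nu>) = c * \<mu> E - c * \<nu> E"
      unfolding X_def f_def using indicator_simple(2)[OF alg EA] muA nuA by simp
    also have "\<dots> = c * (\<mu> E - \<nu> E)" by (simp add: algebra_simps)
    also have "\<dots> = -2" unfolding c_def using E by (simp add: divide_simps)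
    finally have "X f (\<mu>, \<nu>) = -2" .
    then have "(\<mu>, \<nu>) \<in> U f" unfolding U_def topP using muA nuA by simp
    then show "(\<mu>, \<nu>) \<in> \<Union>(U ` simple_fns \<Omega> A)" using fs by blast
  qed
  obtain \<F> where \<F>: "finite \<F>" "\<F> \<subseteq> U ` simple_fns \<Omega> A" "M \<times> N \<subseteq> \<Union>\<F>"
  proof -
    have op: "\<And>V. V \<in> U ` simple_fns \<Omega> A \<Longrightarrow> openin ?P V" using opU by blast
    show ?thesis using compactinD[OF cpt op cov] that by blast
  qed
  obtain F where F: "F \<subseteq> simple_fns \<Omega> A" "finite F" "\<F> = U ` F"
    using finite_subset_image[OF \<F>(1,2)] by blast
  have covF: "\<exists>f\<in>F. X f z < -1" if "z \<in> M \<times> N" for z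
  proof -
    from that \<F>(3) have "z \<in> \<Union>(U ` F)" unfolding F(3) by blast
    then obtain f where "f \<in> F" "z \<in> U f" by blast
    then show ?thesis unfolding U_def by auto
  qed
  define h where "h z = (\<Sum>f\<in>F. (max 0 (-1 - X f z))\<^sup>2)" for z
  have contH: "continuous_map ?P euclideanreal h"
  proof -
    have "continuous_map ?P euclideanreal (\<lambda>z. (max 0 (-1 - X f z))\<^sup>2)" if "f \<in> F" for f
      using contX[of f] F(1) that
      by (intro continuous_map_real_pow continuous_map_real_max continuous_map_canonical_const
          continuous_map_diff) auto
    then show ?thesis unfolding h_def by (intro continuous_map_sum[OF F(2)])
  qed
  have "compact (h ` (M \<times> N))" using image_compactin[OF cpt contH] by simp
  moreover have "h ` (M \<times> N) \<noteq> {}" using neM neN by auto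
  ultimately obtain s where "s \<in> h ` (M \<times> N)" "\<forall>t\<in>h ` (M \<times> N). s \<le> t"
    using compact_attains_inf by blast
  then obtain z0 where z0: "z0 \<in> M \<times> N" "\<And>z. z \<in> M \<times> N \<Longrightarrow> h z0 \<le> h z" by auto
  obtain \<mu>0 \<nu>0 where z0e: "z0 = (\<mu>0, \<nu>0)" by (cases z0)
  have mu0: "\<mu>0 \<in> M" and nu0: "\<nu>0 \<in> N" using z0 z0e by auto
  define a where "a f = X f z0" for f
  define w where "w f = max 0 (-1 - a f)" for f
  have var: "(\<Sum>f\<in>F. w f * (X f (\<mu>, \<nu>) - a f)) \<le> 0" if mu: "\<mu> \<in> M" and nu: "\<nu> \<in> N" for \<mu> \<nu>
    unfolding w_def
  proof (rule var_ineq[OF F(2)])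
    fix t :: real assume t: "0 < t" "t \<le> 1"
    define zt where "zt = ((\<lambda>E. t * \<mu> E + (1 - t) * \<mu>0 E), (\<lambda>E. t * \<nu> E + (1 - t) * \<nu>0 E))"
    have ztM: "zt \<in> M \<times> N"
    proof -
      have "(\<lambda>E. t * \<mu> E + (1 - t) * \<mu>0 E) \<in> M" using cM mu mu0 t unfolding convex_ba_def by simp
      moreover have "(\<lambda>E. t * \<nu> E + (1 - t) * \<nu>0 E) \<in> N" using cN nu nu0 t unfolding convex_ba_def by simp
      ultimately show ?thesis unfolding zt_def by simp
    qed
    have Xzt: "X f zt = a f + t * (X f (\<mu>, \<nu>) - a f)" for f
      unfolding X_def zt_def a_def z0e by (simp only: fst_conv snd_conv integral_comb) (simp add: algebra_simps)
    have "h z0 \<le> h zt" by (rule z0(2)[OF ztM])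
    then show "(\<Sum>f\<in>F. (max 0 (-1 - a f))\<^sup>2) \<le> (\<Sum>f\<in>F. (max 0 (-1 - (a f + t * (X f (\<mu>, \<nu>) - a f))))\<^sup>2)"
      unfolding h_def Xzt a_def .
  qed
  define g where "g = (\<lambda>x. \<Sum>f\<in>F. w f * f x)"
  have gS: "g \<in> simple_fns \<Omega> A" and gI: "\<And>\<mu>. \<mu> \<in> ba \<Omega> A \<Longrightarrow> ba_integral \<Omega> \<mu> g = (\<Sum>f\<in>F. w f * ba_integral \<Omega> \<mu> f)"
    using sum_simple[OF alg F(2), of id w] F(1) unfolding g_def by auto
  define \<delta> where "\<delta> = (\<Sum>f\<in>F. w f * a f)"
  have bound: "ba_integral \<Omega> \<mu> g - ba_integral \<Omega> \<nu> g \<le> \<delta>" if mu: "\<mu> \<in> M" and nu: "\<nu> \<in> N" for \<mu> \<nu>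
  proof -
    have "ba_integral \<Omega> \<mu> g - ba_integral \<Omega> \<nu> g = (\<Sum>f\<in>F. w f * X f (\<mu>, \<nu>))"
    proof -
      have "\<mu> \<in> ba \<Omega> A" "\<nu> \<in> ba \<Omega> A" using mu nu MA NA by auto
      then show ?thesis unfolding X_def by (simp add: gI sum_subtractf right_diff_distrib)
    qed
    also have "\<dots> \<le> \<delta>"
      using var[OF mu nu] unfolding \<delta>_def by (simp add: sum_subtractf right_diff_distrib)
    finally show ?thesis .
  qed
  have "\<delta> < 0"
  proof -
    obtain f0 where f0: "f0 \<in> F" "X f0 z0 < -1" using covF[OF z0(1)] by blast
    have "\<delta> \<le> (\<Sum>f\<in>F. - w f)"
      unfolding \<delta>_def
    proof (rule sum_mono)
      fix f show "w f * a f \<le> - w f"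
      proof (cases "a f < -1")
        case True
        then have wf: "w f = -1 - a f" unfolding w_def by simp
        have "w f * a f + w f = - (a f + 1)\<^sup>2" unfolding wf by (simp add: power2_eq_square algebra_simps)
        moreover have "(a f + 1)\<^sup>2 \<ge> 0" by simp
        ultimately show ?thesis by linarith
      next
        case False
        then show ?thesis unfolding w_def by simp
      qed
    qed
    moreover have "0 < (\<Sum>f\<in>F. w f)"
      by (rule sum_pos2[OF F(2) f0(1)]) (use f0(2) in \<open>auto simp: w_def a_def\<close>)
    ultimately show ?thesis by (simp add: sum_negf)
  qed
  then show ?thesis using gS bound by blast
qed

definition extr :: "('a set \<Rightarrow> real) set \<Rightarrow> ('a set \<Rightarrow> real) set \<Rightarrow> bool" where
  "extr M F \<longleftrightarrow> (\<forall>\<mu>\<in>M. \<forall>\<nu>\<in>M. \<forall>t::real. 0 < t \<and> t < 1 \<and> (\<lambda>E. t * \<mu> E + (1 - t) * \<nu> E) \<in> F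
      \<longrightarrow> \<mu> \<in> F \<and> \<nu> \<in> F)"

lemma argmax_extr:
  assumes ext: "extr M F" and le: "\<forall>\<rho>\<in>F. ba_integral \<Omega> \<rho> g \<le> m"
  shows "extr M {\<rho>\<in>F. ba_integral \<Omega> \<rho> g = m}"
  unfolding extr_def
proof (intro ballI allI impI)
  fix \<mu> \<nu> t assume mu: "\<mu> \<in> M" and nu: "\<nu> \<in> M"
    and H: "0 < t \<and> t < 1 \<and> (\<lambda>E. t * \<mu> E + (1 - t) * \<nu> E) \<in> {\<rho> \<in> F. ba_integral \<Omega> \<rho> g = m}"
  then have t: "0 < t" "t < 1" and inF: "(\<lambda>E. t * \<mu> E + (1 - t) * \<nu> E) \<in> F"
    and eq: "t * ba_integral \<Omega> \<mu> g + (1 - t) * ba_integral \<Omega> \<nu> g = m"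
    by (auto simp: integral_comb)
  have F: "\<mu> \<in> F" "\<nu> \<in> F" using ext mu nu t inF unfolding extr_def by blast+
  have a: "ba_integral \<Omega> \<mu> g \<le> m" "ba_integral \<Omega> \<nu> g \<le> m" using le F by auto
  have "ba_integral \<Omega> \<mu> g = m"
  proof (rule ccontr)
    assume "ba_integral \<Omega> \<mu> g \<noteq> m"
    then have "ba_integral \<Omega> \<mu> g < m" using a by simp
    then have "t * ba_integral \<Omega> \<mu> g < t * m" using t by simp
    moreover have "(1 - t) * ba_integral \<Omega> \<nu> g \<le> (1 - t) * m" using t a by (intro mult_left_mono) auto
    ultimately show False using eq by (simp add: algebra_simps)
  qed
  moreover have "ba_integral \<Omega> \<nu> g = m"
  proof (rule ccontr)
    assume "ba_integral \<Omega> \<nu> g \<noteq> m"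
    then have "ba_integral \<Omega> \<nu> g < m" using a by simp
    then have "(1 - t) * ba_integral \<Omega> \<nu> g < (1 - t) * m" using t by simp
    moreover have "t * ba_integral \<Omega> \<mu> g \<le> t * m" using t a by (intro mult_left_mono) auto
    ultimately show False using eq by (simp add: algebra_simps)
  qed
  ultimately show "\<mu> \<in> {\<rho> \<in> F. ba_integral \<Omega> \<rho> g = m} \<and> \<nu> \<in> {\<rho> \<in> F. ba_integral \<Omega> \<rho> g = m}"
    using F by simp
qed

lemma exists_extreme_max:
  assumes alg: "algebra \<Omega> A" and MA: "M \<subseteq> ba \<Omega> A"
    and kM: "compactin (weak_ba \<Omega> A) M" and neM: "M \<noteq> {}" and k: "k \<in> simple_fns \<Omega> A"
  shows "\<exists>e\<in>extreme_points_ba M. \<forall>\<mu>\<in>M. ba_integral \<Omega> \<mu> k \<le> ba_integral \<Omega> e k"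
proof -
  let ?W = "weak_ba \<Omega> A"
  let ?T = "subtopology ?W M"
  have cs: "compact_space ?T" by (rule compact_space_subtopology[OF kM])
  have topT: "topspace ?T = M" using compactin_subset_topspace[OF kM] by auto
  have contT: "continuous_map ?T euclideanreal (\<lambda>\<rho>. ba_integral \<Omega> \<rho> g)" if "g \<in> simple_fns \<Omega> A" for g
    by (rule continuous_map_from_subtopology[OF cont_integral[OF alg that]])
  have maxex: "\<exists>m. (\<exists>\<rho>\<in>F. ba_integral \<Omega> \<rho> g = m) \<and> (\<forall>\<rho>\<in>F. ba_integral \<Omega> \<rho> g \<le> m)"
    if F: "closedin ?T F" "F \<noteq> {}" and g: "g \<in> simple_fns \<Omega> A" for F g
  proof -
    have "compactin ?T F" by (rule closedin_compact_space[OF cs F(1)])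
    then have "compact ((\<lambda>\<rho>. ba_integral \<Omega> \<rho> g) ` F)" using image_compactin[OF _ contT[OF g]] by simp
    then obtain s where "s \<in> (\<lambda>\<rho>. ba_integral \<Omega> \<rho> g) ` F" "\<forall>t\<in>(\<lambda>\<rho>. ba_integral \<Omega> \<rho> g) ` F. t \<le> s"
      using compact_attains_sup F(2) by blast
    then show ?thesis by blast
  qed
  have clargmax: "closedin ?T {\<rho>\<in>F. ba_integral \<Omega> \<rho> g = m}"
    if F: "closedin ?T F" and g: "g \<in> simple_fns \<Omega> A" for F g m
  proof -
    have "closedin ?T {\<rho>\<in>topspace ?T. ba_integral \<Omega> \<rho> g \<in> {m}}"
      by (rule closedin_continuous_map_preimage[OF contT[OF g]]) simp
    then have "closedin ?T (F \<inter> {\<rho>\<in>topspace ?T. ba_integral \<Omega> \<rho> g \<in> {m}})"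
      using F by (intro closedin_Int)
    moreover have "F \<inter> {\<rho>\<in>topspace ?T. ba_integral \<Omega> \<rho> g \<in> {m}} = {\<rho>\<in>F. ba_integral \<Omega> \<rho> g = m}"
      using closedin_subset[OF F] by auto
    ultimately show ?thesis by simp
  qed
  have clM: "closedin ?T M" using closedin_topspace[of ?T] topT by simp
  obtain m0 where m0: "\<exists>\<rho>\<in>M. ba_integral \<Omega> \<rho> k = m0" "\<forall>\<rho>\<in>M. ba_integral \<Omega> \<rho> k \<le> m0"
    using maxex[OF clM neM k] by blast
  define F0 where "F0 = {\<rho>\<in>M. ba_integral \<Omega> \<rho> k = m0}"
  define Fam where "Fam = {F. F \<subseteq> F0 \<and> F \<noteq> {} \<and> closedin ?T F \<and> extr M F}"
  have extrM: "extr M M" unfolding extr_def by blast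
  have F0Fam: "F0 \<in> Fam" unfolding Fam_def F0_def
    using m0 clargmax[OF clM k] argmax_extr[OF extrM m0(2)] by auto
  have F0M: "F0 \<subseteq> M" unfolding F0_def by auto
  define G where "G = (\<lambda>F. M - F) ` Fam"
  have bk: "M - (M - F) = F" if "F \<in> Fam" for F using that F0M unfolding Fam_def by auto
  have "\<exists>Mx\<in>G. \<forall>X\<in>G. Mx \<subseteq> X \<longrightarrow> X = Mx"
  proof (rule subset_Zorn)
    fix C assume ch: "subset.chain G C"
    show "\<exists>U\<in>G. \<forall>X\<in>C. X \<subseteq> U"
    proof (cases "C = {}")
      case True then show ?thesis using F0Fam unfolding G_def by blast
    next
      case False
      define Fs where "Fs = (\<lambda>X. M - X) ` C"
      have CG: "C \<subseteq> G" using ch by (simp add: subset_chain_def)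
      have FsFam: "Fs \<subseteq> Fam"
      proof
        fix F assume "F \<in> Fs"
        then obtain X where X: "X \<in> C" "F = M - X" unfolding Fs_def by blast
        then obtain F' where "F' \<in> Fam" "X = M - F'" using CG unfolding G_def by blast
        then show "F \<in> Fam" using X bk by simp
      qed
      have Fsne: "Fs \<noteq> {}" using False unfolding Fs_def by simp
      have Fsch: "subset.chain Fam Fs"
        unfolding subset_chain_def
      proof (intro conjI ballI)
        show "Fs \<subseteq> Fam" by (rule FsFam)
        fix X Y assume "X \<in> Fs" "Y \<in> Fs"
        then obtain X' Y' where "X' \<in> C" "Y' \<in> C" "X = M - X'" "Y = M - Y'" unfolding Fs_def by blast
        moreover have "X' \<subseteq> Y' \<or> Y' \<subseteq> X'" using ch \<open>X' \<in> C\<close> \<open>Y' \<in> C\<close> by (simp add: subset_chain_def)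
        ultimately show "X \<subseteq> Y \<or> Y \<subseteq> X" by blast
      qed
      define I where "I = \<Inter>Fs"
      have Icl: "closedin ?T I" unfolding I_def
        using FsFam Fsne by (intro closedin_Inter) (auto simp: Fam_def)
      have Ine: "I \<noteq> {}" unfolding I_def
      proof -
        have "\<forall>C\<in>Fs. closedin ?T C" using FsFam by (auto simp: Fam_def)
        moreover have "\<forall>\<F>. finite \<F> \<and> \<F> \<subseteq> Fs \<longrightarrow> \<Inter>\<F> \<noteq> {}"
        proof (intro allI impI)
          fix \<F> assume H: "finite \<F> \<and> \<F> \<subseteq> Fs"
          show "\<Inter>\<F> \<noteq> {}"
          proof (cases "\<F> = {}")
            case True then show ?thesis by simp
          next
            case False
            have "subset.chain Fam \<F>" using Fsch H by (auto simp: subset_chain_def)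
            then have "\<Inter>\<F> \<in> \<F>" using Inter_in_chain H False by blast
            then show ?thesis using H FsFam by (auto simp: Fam_def)
          qed
        qed
        ultimately show "\<Inter>Fs \<noteq> {}" using cs unfolding compact_space_fip by blast
      qed
      have IF0: "I \<subseteq> F0" unfolding I_def using Fsne FsFam by (auto simp: Fam_def)
      have Iextr: "extr M I" unfolding I_def extr_def
      proof (intro ballI allI impI)
        fix \<mu> \<nu> t assume mu: "\<mu> \<in> M" and nu: "\<nu> \<in> M"
          and H: "0 < t \<and> t < 1 \<and> (\<lambda>E. t * \<mu> E + (1 - t) * \<nu> E) \<in> \<Inter>Fs"
        have "\<mu> \<in> X \<and> \<nu> \<in> X" if X: "X \<in> Fs" for X
        proof -
          have "extr M X" using X FsFam by (auto simp: Fam_def)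
          then show ?thesis using mu nu H X unfolding extr_def by blast
        qed
        then show "\<mu> \<in> \<Inter>Fs \<and> \<nu> \<in> \<Inter>Fs" by blast
      qed
      have IFam: "I \<in> Fam" unfolding Fam_def using Icl Ine IF0 Iextr by blast
      show ?thesis
      proof (intro bexI[of _ "M - I"] ballI)
        show "M - I \<in> G" unfolding G_def using IFam by blast
        fix X assume "X \<in> C"
        then have "M - X \<in> Fs" unfolding Fs_def by blast
        then have "I \<subseteq> M - X" unfolding I_def by blast
        moreover have "X \<subseteq> M" using \<open>X \<in> C\<close> CG unfolding G_def by blast
        ultimately show "X \<subseteq> M - I" by blast
      qed
    qed
  qed
  then obtain Fm where Fm: "Fm \<in> Fam" and minF: "\<And>F. F \<in> Fam \<Longrightarrow> F \<subseteq> Fm \<Longrightarrow> F = Fm"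
  proof -
    assume R: "\<And>Fm. Fm \<in> Fam \<Longrightarrow> (\<And>F. F \<in> Fam \<Longrightarrow> F \<subseteq> Fm \<Longrightarrow> F = Fm) \<Longrightarrow> thesis"
    obtain Mx where Mx: "Mx \<in> G" "\<forall>X\<in>G. Mx \<subseteq> X \<longrightarrow> X = Mx" using \<open>\<exists>Mx\<in>G. _\<close> by blast
    then obtain Fm where Fm: "Fm \<in> Fam" "Mx = M - Fm" unfolding G_def by blast
    show thesis
    proof (rule R[OF Fm(1)])
      fix F assume F: "F \<in> Fam" "F \<subseteq> Fm"
      then have "M - F \<in> G" "M - Fm \<subseteq> M - F" unfolding G_def by auto
      then have "M - F = M - Fm" using Mx Fm(2) by blast
      then show "F = Fm" using bk[OF F(1)] bk[OF Fm(1)] by metis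
    qed
  qed
  have FmProps: "Fm \<subseteq> F0" "Fm \<noteq> {}" "closedin ?T Fm" "extr M Fm" using Fm unfolding Fam_def by auto
  obtain e where e: "e \<in> Fm" using FmProps(2) by blast
  have single: "\<rho> = e" if rho: "\<rho> \<in> Fm" for \<rho>
  proof (rule ccontr)
    assume "\<rho> \<noteq> e"
    then obtain E where E: "\<rho> E \<noteq> e E" by (auto simp: fun_eq_iff)
    have rA: "\<rho> \<in> ba \<Omega> A" "e \<in> ba \<Omega> A" using rho e FmProps(1) F0M MA by auto
    have EA: "E \<in> A" using E ba_out[OF rA(1)] ba_out[OF rA(2)] by metis
    define g where "g = (\<lambda>x. if x \<in> E then (1::real) else 0)"
    have gS: "g \<in> simple_fns \<Omega> A" unfolding g_def by (rule indicator_simple(1)[OF alg EA])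
    have gI: "\<And>\<mu>. \<mu> \<in> ba \<Omega> A \<Longrightarrow> ba_integral \<Omega> \<mu> g = \<mu> E"
      unfolding g_def using indicator_simple(2)[OF alg EA] by simp
    obtain m where m: "\<exists>\<rho>\<in>Fm. ba_integral \<Omega> \<rho> g = m" "\<forall>\<rho>\<in>Fm. ba_integral \<Omega> \<rho> g \<le> m"
      using maxex[OF FmProps(3) FmProps(2) gS] by blast
    define F' where "F' = {\<rho>\<in>Fm. ba_integral \<Omega> \<rho> g = m}"
    have "F' \<in> Fam" unfolding Fam_def F'_def
      using m(1) FmProps clargmax[OF FmProps(3) gS] argmax_extr[OF FmProps(4) m(2)] by auto
    moreover have "F' \<subseteq> Fm" unfolding F'_def by auto
    ultimately have "F' = Fm" by (rule minF)
    then have "ba_integral \<Omega> \<rho> g = m" "ba_integral \<Omega> e g = m" using rho e unfolding F'_def by auto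
    then show False using E gI rA by simp
  qed
  have eext: "e \<in> extreme_points_ba M"
    unfolding extreme_points_ba_def
  proof (intro CollectI conjI notI)
    show "e \<in> M" using e FmProps(1) F0M by auto
    assume "\<exists>\<mu>\<in>M. \<exists>\<nu>\<in>M. \<exists>t. \<mu> \<noteq> \<nu> \<and> 0 < t \<and> t < 1 \<and> e = (\<lambda>E. t * \<mu> E + (1 - t) * \<nu> E)"
    then obtain \<mu> \<nu> t where H: "\<mu> \<in> M" "\<nu> \<in> M" "\<mu> \<noteq> \<nu>" "0 < t" "t < 1" "e = (\<lambda>E. t * \<mu> E + (1 - t) * \<nu> E)"
      by blast
    then have "\<mu> \<in> Fm \<and> \<nu> \<in> Fm" using FmProps(4) e unfolding extr_def by blast
    then show False using single H(3) by blast
  qed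
  have "ba_integral \<Omega> e k = m0" using e FmProps(1) unfolding F0_def by auto
  then show ?thesis using eext m0(2) by auto
qed

theorem mainTheorem12:
  fixes \<Omega> :: "'a set" and A :: "'a set set"
    and M N :: "('a set \<Rightarrow> real) set"
  assumes "algebra \<Omega> A"
    and "M \<subseteq> ba \<Omega> A" and "N \<subseteq> ba \<Omega> A"
    and "convex_ba M" and "convex_ba N"
    and "compactin (weak_ba \<Omega> A) M" and "compactin (weak_ba \<Omega> A) N"
  shows "(M \<inter> N = {} \<longleftrightarrow>
           (\<exists>f\<in>simple_fns \<Omega> A.
              (INF \<nu>\<in>N. ereal (ba_integral \<Omega> \<nu> f)) > (SUP \<mu>\<in>M. ereal (ba_integral \<Omega> \<mu> f))))
       \<and> (\<exists>K \<subseteq> simple_fns \<Omega> A. \<exists>M0 \<subseteq> extreme_points_ba M.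
            (\<forall>k\<in>K. M0 \<noteq> {} \<longrightarrow> (\<exists>\<mu>0\<in>M0. \<forall>\<mu>\<in>M0. ba_integral \<Omega> \<mu> k \<le> ba_integral \<Omega> \<mu>0 k))
          \<and> M = {m \<in> ba \<Omega> A. \<forall>k\<in>K.
                   ereal (ba_integral \<Omega> m k) \<le> (SUP \<mu>\<in>M0. ereal (ba_integral \<Omega> \<mu> k))})"
proof -
  note alg = assms(1) and MA = assms(2) and NA = assms(3) and cM = assms(4) and cN = assms(5)
    and kM = assms(6) and kN = assms(7)
  have z: "(\<lambda>x. 0) \<in> simple_fns \<Omega> A" and zi: "\<And>\<mu>. ba_integral \<Omega> \<mu> (\<lambda>x. 0) = 0"
    using zero_simple[OF alg] by auto
  have part1: "M \<inter> N = {} \<longleftrightarrow>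
           (\<exists>f\<in>simple_fns \<Omega> A.
              (INF \<nu>\<in>N. ereal (ba_integral \<Omega> \<nu> f)) > (SUP \<mu>\<in>M. ereal (ba_integral \<Omega> \<mu> f)))"
  proof
    assume disj: "M \<inter> N = {}"
    show "\<exists>f\<in>simple_fns \<Omega> A.
              (INF \<nu>\<in>N. ereal (ba_integral \<Omega> \<nu> f)) > (SUP \<mu>\<in>M. ereal (ba_integral \<Omega> \<mu> f))"
    proof (cases "M = {} \<or> N = {}")
      case True
      show ?thesis
      proof (rule bexI[OF _ z])
        show "(INF \<nu>\<in>N. ereal (ba_integral \<Omega> \<nu> (\<lambda>x. 0))) > (SUP \<mu>\<in>M. ereal (ba_integral \<Omega> \<mu> (\<lambda>x. 0)))"
        proof (cases "M = {}")
          case True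
          have "0 \<le> (INF \<nu>\<in>N. ereal (ba_integral \<Omega> \<nu> (\<lambda>x. 0)))" by (rule INF_greatest) (simp add: zi)
          moreover have "-\<infinity> < (0::ereal)" by simp
          ultimately show ?thesis using True by (simp add: bot_ereal_def)
        next
          case False
          then have "N = {}" using \<open>M = {} \<or> N = {}\<close> by simp
          have "(SUP \<mu>\<in>M. ereal (ba_integral \<Omega> \<mu> (\<lambda>x. 0))) \<le> 0" by (rule SUP_least) (simp add: zi)
          moreover have "(0::ereal) < \<infinity>" by simp
          ultimately have "(SUP \<mu>\<in>M. ereal (ba_integral \<Omega> \<mu> (\<lambda>x. 0))) < \<infinity>" by (rule le_less_trans)
          then show ?thesis using \<open>N = {}\<close> by (simp add: top_ereal_def)
        qed
      qed
    next
      case False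
      then have neM: "M \<noteq> {}" and neN: "N \<noteq> {}" by auto
      obtain g \<delta> where g: "g \<in> simple_fns \<Omega> A" "\<delta> < 0"
        and bd: "\<And>\<mu> \<nu>. \<mu> \<in> M \<Longrightarrow> \<nu> \<in> N \<Longrightarrow> ba_integral \<Omega> \<mu> g - ba_integral \<Omega> \<nu> g \<le> \<delta>"
        using separation[OF alg MA NA cM cN kM kN disj neM neN] by blast
      obtain \<mu>0 where mu0: "\<mu>0 \<in> M" using neM by blast
      obtain \<nu>0 where nu0: "\<nu>0 \<in> N" using neN by blast
      define s where "s = (SUP \<mu>\<in>M. ereal (ba_integral \<Omega> \<mu> g))"
      have sle: "s \<le> ereal (ba_integral \<Omega> \<nu> g + \<delta>)" if "\<nu> \<in> N" for \<nu>
        unfolding s_def by (rule SUP_least) (use bd that in \<open>force\<close>)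
      have sge: "ereal (ba_integral \<Omega> \<mu>0 g) \<le> s" unfolding s_def using mu0 by (rule SUP_upper)
      obtain r where r: "s = ereal r" using sle[OF nu0] sge by (cases s) auto
      have "ereal (r - \<delta>) \<le> (INF \<nu>\<in>N. ereal (ba_integral \<Omega> \<nu> g))"
        by (rule INF_greatest) (use sle r in \<open>force\<close>)
      moreover have "ereal r < ereal (r - \<delta>)" using g(2) by simp
      ultimately have "ereal r < (INF \<nu>\<in>N. ereal (ba_integral \<Omega> \<nu> g))" by (metis less_le_trans)
      then show ?thesis using g(1) r unfolding s_def by (intro bexI[of _ g]) auto
    qed
  next
    assume "\<exists>f\<in>simple_fns \<Omega> A.
              (INF \<nu>\<in>N. ereal (ba_integral \<Omega> \<nu> f)) > (SUP \<mu>\<in>M. ereal (ba_integral \<Omega> \<mu> f))"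
    then obtain f where f: "(INF \<nu>\<in>N. ereal (ba_integral \<Omega> \<nu> f)) > (SUP \<mu>\<in>M. ereal (ba_integral \<Omega> \<mu> f))"
      by blast
    show "M \<inter> N = {}"
    proof (rule ccontr)
      assume "M \<inter> N \<noteq> {}"
      then obtain \<mu> where "\<mu> \<in> M" "\<mu> \<in> N" by blast
      then have "ereal (ba_integral \<Omega> \<mu> f) \<le> (SUP \<mu>\<in>M. ereal (ba_integral \<Omega> \<mu> f))"
        "(INF \<nu>\<in>N. ereal (ba_integral \<Omega> \<nu> f)) \<le> ereal (ba_integral \<Omega> \<mu> f)"
        by (auto intro: SUP_upper INF_lower)
      then show False using f by simp
    qed
  qed
  have part2: "\<exists>K \<subseteq> simple_fns \<Omega> A. \<exists>M0 \<subseteq> extreme_points_ba M.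
            (\<forall>k\<in>K. M0 \<noteq> {} \<longrightarrow> (\<exists>\<mu>0\<in>M0. \<forall>\<mu>\<in>M0. ba_integral \<Omega> \<mu> k \<le> ba_integral \<Omega> \<mu>0 k))
          \<and> M = {m \<in> ba \<Omega> A. \<forall>k\<in>K.
                   ereal (ba_integral \<Omega> m k) \<le> (SUP \<mu>\<in>M0. ereal (ba_integral \<Omega> \<mu> k))}"
  proof (cases "M = {}")
    case True
    have "extreme_points_ba M = {}" using True unfolding extreme_points_ba_def by auto
    have "{m \<in> ba \<Omega> A. \<forall>k\<in>simple_fns \<Omega> A.
                   ereal (ba_integral \<Omega> m k) \<le> (SUP \<mu>\<in>{}. ereal (ba_integral \<Omega> \<mu> k))} = {}"
    proof (intro equalityI subsetI)
      fix m assume "m \<in> {m \<in> ba \<Omega> A. \<forall>k\<in>simple_fns \<Omega> A.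
                   ereal (ba_integral \<Omega> m k) \<le> (SUP \<mu>\<in>{}. ereal (ba_integral \<Omega> \<mu> k))}"
      then have "ereal (ba_integral \<Omega> m (\<lambda>x. 0)) \<le> (SUP \<mu>\<in>{}. ereal (ba_integral \<Omega> \<mu> (\<lambda>x. 0)))"
        using z by blast
      then show "m \<in> {}" by (simp add: zi bot_ereal_def)
    qed simp
    then show ?thesis using True by (intro exI[of _ "simple_fns \<Omega> A"] exI[of _ "{}"]) auto
  next
    case False
    have "\<forall>k\<in>simple_fns \<Omega> A. \<exists>e\<in>extreme_points_ba M. \<forall>\<mu>\<in>M. ba_integral \<Omega> \<mu> k \<le> ba_integral \<Omega> e k"
      using exists_extreme_max[OF alg MA kM False] by blast
    then obtain ee where ee: "\<And>k. k \<in> simple_fns \<Omega> A \<Longrightarrow> ee k \<in> extreme_points_ba M"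
      "\<And>k \<mu>. k \<in> simple_fns \<Omega> A \<Longrightarrow> \<mu> \<in> M \<Longrightarrow> ba_integral \<Omega> \<mu> k \<le> ba_integral \<Omega> (ee k) k"
      by metis
    define M0 where "M0 = {e \<in> extreme_points_ba M. \<exists>k\<in>simple_fns \<Omega> A. \<forall>\<mu>\<in>M. ba_integral \<Omega> \<mu> k \<le> ba_integral \<Omega> e k}"
    have M0sub: "M0 \<subseteq> extreme_points_ba M" unfolding M0_def by auto
    have M0M: "M0 \<subseteq> M" using M0sub unfolding extreme_points_ba_def by auto
    have eeM0: "ee k \<in> M0" if "k \<in> simple_fns \<Omega> A" for k
      unfolding M0_def using ee that by blast
    have supeq: "(SUP \<mu>\<in>M0. ereal (ba_integral \<Omega> \<mu> k)) = ereal (ba_integral \<Omega> (ee k) k)"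
      if k: "k \<in> simple_fns \<Omega> A" for k
    proof (rule antisym)
      show "(SUP \<mu>\<in>M0. ereal (ba_integral \<Omega> \<mu> k)) \<le> ereal (ba_integral \<Omega> (ee k) k)"
        by (rule SUP_least) (use ee(2)[OF k] M0M in auto)
      show "ereal (ba_integral \<Omega> (ee k) k) \<le> (SUP \<mu>\<in>M0. ereal (ba_integral \<Omega> \<mu> k))"
        by (rule SUP_upper[OF eeM0[OF k]])
    qed
    show ?thesis
    proof (intro exI[of _ "simple_fns \<Omega> A"] exI[of _ M0] conjI subset_refl M0sub ballI impI)
      fix k assume k: "k \<in> simple_fns \<Omega> A"
      show "\<exists>\<mu>0\<in>M0. \<forall>\<mu>\<in>M0. ba_integral \<Omega> \<mu> k \<le> ba_integral \<Omega> \<mu>0 k"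
        using eeM0[OF k] ee(2)[OF k] M0M by blast
    next
      show "M = {m \<in> ba \<Omega> A. \<forall>k\<in>simple_fns \<Omega> A.
                   ereal (ba_integral \<Omega> m k) \<le> (SUP \<mu>\<in>M0. ereal (ba_integral \<Omega> \<mu> k))}"
      proof (intro equalityI subsetI CollectI conjI ballI)
        fix m assume "m \<in> M"
        then show "m \<in> ba \<Omega> A" using MA by auto
        fix k assume k: "k \<in> simple_fns \<Omega> A"
        show "ereal (ba_integral \<Omega> m k) \<le> (SUP \<mu>\<in>M0. ereal (ba_integral \<Omega> \<mu> k))"
          unfolding supeq[OF k] using ee(2)[OF k \<open>m \<in> M\<close>] by simp
      next
        fix m assume m: "m \<in> {m \<in> ba \<Omega> A. \<forall>k\<in>simple_fns \<Omega> A.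
                   ereal (ba_integral \<Omega> m k) \<le> (SUP \<mu>\<in>M0. ereal (ba_integral \<Omega> \<mu> k))}"
        show "m \<in> M"
        proof (rule ccontr)
          assume "m \<notin> M"
          then have disj: "M \<inter> {m} = {}" by simp
          have mA: "m \<in> ba \<Omega> A" using m by simp
          have cm: "convex_ba {m}" unfolding convex_ba_def by (auto simp: algebra_simps)
          have km: "compactin (weak_ba \<Omega> A) {m}" using mA by (simp add: topspace_weak)
          obtain g \<delta> where g: "g \<in> simple_fns \<Omega> A" "\<delta> < 0"
            and bd: "\<And>\<mu> \<nu>. \<mu> \<in> M \<Longrightarrow> \<nu> \<in> {m} \<Longrightarrow> ba_integral \<Omega> \<mu> g - ba_integral \<Omega> \<nu> g \<le> \<delta>"
            using separation[OF alg MA _ cM cm kM km disj False] mA by blast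
          have "ba_integral \<Omega> (ee g) g - ba_integral \<Omega> m g \<le> \<delta>"
            using bd ee(1)[OF g(1)] unfolding extreme_points_ba_def by auto
          moreover have "ereal (ba_integral \<Omega> m g) \<le> ereal (ba_integral \<Omega> (ee g) g)"
            using m g(1) supeq[OF g(1)] by auto
          ultimately show False using g(2) by simp
        qed
      qed
    qed
  qed
  show ?thesis using part1 part2 by blast
qed

end
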